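(* Let $p\in\{1,\infty\}$, let $f:\mathbb{R}^n\to\mathbb{R}^n$ be a Lipschitz, differentiable vector field, and let $W\in\mathbb{R}^{n\times n}$ be invertible. Then $f$ is WIC with respect to the weighted norm $x\mapsto \|Wx\|_p$ if and only if there exist $\gamma\ge 0$ and a differentiable Lipschitz map $\phi:\mathbb{R}^n\to\mathbb{R}^n$ with $\|\phi\|_{\mathrm{Lip},p}\le\gamma$ such that \[ f(x) = -\gamma x + W^{-1}\phi(Wx)\quad\text{for all } x\in\mathbb{R}^n. \]
   Context: For $x\in\mathbb{R}^n$, $\|x\|_1=\sum_i|x_i|$ and $\|x\|_\infty=\max_i|x_i|$, with induced matrix norms $\|A\|_p=\sup_{x\neq0}\|Ax\|_p/\|x\|_p$. For a norm $\|\cdot\|$ on $\mathbb{R}^n$ with induced matrix norm also denoted $\|\cdot\|$, the matrix measure of $A$ is $\mu(A)=\lim_{h\to0^+}\frac{\|I+hA\|-1}{h}$; for the weighted norm $\|Wx\|_p$ this equals $\mu_p(WAW^{-1})$, where $\mu_1(B)=\max_j\big(b_{jj}+\sum_{i\ne j}|b_{ij}|\big)$ and $\mu_\infty(B)=\max_i\big(b_{ii}+\sum_{j\ne i}|b_{ij}|\big)$. $Df(x)$ is the Jacobian of $f$ at $x$. A vector field $f$ is weakly infinitesimally contracting (WIC) with respect to a norm if $\sup_{x\in\mathbb{R}^n}\mu(Df(x))\le 0$ for the associated matrix measure $\mu$. For differentiable $\phi$, $\|\phi\|_{\mathrm{Lip},p}=\sup_{x}\|D\phi(x)\|_p$. 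*)

theory Defs
  imports "HOL-Analysis.Analysis"
begin

datatype pidx = P1 | PInf

definition vnorm :: "pidx \<Rightarrow> real^'n \<Rightarrow> real" where
  "vnorm p x = (case p of
      P1 \<Rightarrow> (\<Sum>i\<in>UNIV. \<bar>x $ i\<bar>)
    | PInf \<Rightarrow> Max ((\<lambda>i. \<bar>x $ i\<bar>) ` UNIV))"

definition mnorm :: "pidx \<Rightarrow> real^'n^'n \<Rightarrow> real" where
  "mnorm p A = (SUP x\<in>{x. x \<noteq> 0}. vnorm p (A *v x) / vnorm p x)"

definition mu :: "pidx \<Rightarrow> real^'n^'n \<Rightarrow> real" where
  "mu p B = (case p of
      P1 \<Rightarrow> Max ((\<lambda>j. B $ j $ j + (\<Sum>i\<in>UNIV - {j}. \<bar>B $ i $ j\<bar>)) ` UNIV)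
    | PInf \<Rightarrow> Max ((\<lambda>i. B $ i $ i + (\<Sum>j\<in>UNIV - {i}. \<bar>B $ i $ j\<bar>)) ` UNIV))"

definition jac :: "(real^'n \<Rightarrow> real^'n) \<Rightarrow> real^'n \<Rightarrow> real^'n^'n" where
  "jac f x = matrix (frechet_derivative f (at x))"

text \<open>Matrix measure w.r.t. the weighted norm x \<mapsto> ||W x||_p, i.e. mu_p(W A W^{-1}).\<close>
definition wmu :: "pidx \<Rightarrow> real^'n^'n \<Rightarrow> real^'n^'n \<Rightarrow> real" where
  "wmu p W A = mu p (W ** A ** matrix_inv W)"

definition WIC :: "pidx \<Rightarrow> real^'n^'n \<Rightarrow> (real^'n \<Rightarrow> real^'n) \<Rightarrow> bool" where
  "WIC p W f \<longleftrightarrow> (\<forall>x. wmu p W (jac f x) \<le> 0)"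

end

theory Submission
  imports Defs
begin

lemma inv_W:
  fixes W :: "real^'n^'n"
  assumes "invertible W"
  shows "W ** matrix_inv W = mat 1" "matrix_inv W ** W = mat 1"
proof -
  have "\<exists>A'. W ** A' = mat 1 \<and> A' ** W = mat 1" using assms by (simp add: invertible_def)
  hence "W ** matrix_inv W = mat 1 \<and> matrix_inv W ** W = mat 1"
    unfolding matrix_inv_def by (rule someI_ex)
  thus "W ** matrix_inv W = mat 1" "matrix_inv W ** W = mat 1" by auto
qed

lemma inv_W_vec:
  fixes W :: "real^'n^'n"
  assumes "invertible W"
  shows "W *v (matrix_inv W *v v) = v" "matrix_inv W *v (W *v v) = v"
  by (simp_all add: matrix_vector_mul_assoc inv_W[OF assms])

lemma jac_works:
  fixes h :: "real^'n \<Rightarrow> real^'n"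
  assumes "h differentiable (at x)"
  shows "(h has_derivative (\<lambda>v. jac h x *v v)) (at x)"
proof -
  have lin: "linear (frechet_derivative h (at x))" using assms by (rule linear_frechet_derivative)
  have "(\<lambda>v. jac h x *v v) = frechet_derivative h (at x)"
    unfolding jac_def using matrix_works[OF lin[folded linear_matrix_vector_mul_eq]] by auto
  thus ?thesis using assms frechet_derivative_works by metis
qed

lemma jac_unique:
  fixes h :: "real^'n \<Rightarrow> real^'n"
  assumes "(h has_derivative (\<lambda>v. M *v v)) (at x)"
  shows "jac h x = M"
  unfolding jac_def using frechet_derivative_at[OF assms]
  by (metis matrix_of_matrix_vector_mul)

lemma deriv_bound:
  fixes h :: "real^'n \<Rightarrow> real^'n"
  assumes L: "L-lipschitz_on UNIV h" and d: "(h has_derivative D) (at x)"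
  shows "norm (D v) \<le> L * norm v"
proof (cases "v = 0")
  case True
  have "linear D" using d has_derivative_linear by blast
  then show ?thesis using True linear_0 by (simp add: linear_0)
next
  case False
  have bl: "bounded_linear D" using d by (simp add: has_derivative_at_alt)
  have "norm (D v) \<le> L * norm v + e" if e: "e > 0" for e
  proof -
    have nv: "norm v > 0" using False by simp
    obtain d0 where d0: "d0 > 0" and H: "\<And>y. norm (y - x) < d0 \<Longrightarrow>
        norm (h y - h x - D (y - x)) \<le> (e / norm v) * norm (y - x)"
      using d e nv unfolding has_derivative_at_alt by (meson divide_pos_pos)
    define t where "t = d0 / (2 * norm v)"
    have t: "t > 0" using d0 nv by (simp add: t_def)
    have "norm (t *\<^sub>R v) < d0" using d0 nv by (simp add: t_def)
    hence "norm (h (x + t *\<^sub>R v) - h x - D (t *\<^sub>R v)) \<le> (e / norm v) * norm (t *\<^sub>R v)"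
      using H[of "x + t *\<^sub>R v"] by simp
    also have "\<dots> = t * e" using t nv by simp
    finally have 1: "norm (h (x + t *\<^sub>R v) - h x - D (t *\<^sub>R v)) \<le> t * e" .
    have 2: "norm (h (x + t *\<^sub>R v) - h x) \<le> L * (t * norm v)"
      using lipschitz_on_normD[OF L, of "x + t *\<^sub>R v" x] t by simp
    have "norm (D (t *\<^sub>R v)) \<le> norm (h (x + t *\<^sub>R v) - h x) + norm (h (x + t *\<^sub>R v) - h x - D (t *\<^sub>R v))"
      by (metis norm_triangle_ineq4 diff_diff_eq2 add_diff_cancel_left' norm_minus_commute order_trans norm_triangle_sub)
    also have "\<dots> \<le> L * (t * norm v) + t * e" using 1 2 by simp
    finally have "t * norm (D v) \<le> t * (L * norm v + e)"
      using linear_scale[OF bounded_linear.linear[OF bl]] t by (simp add: algebra_simps)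
    thus ?thesis using t by simp
  qed
  thus ?thesis by (rule field_le_epsilon)
qed

lemma entry_bound:
  fixes h :: "real^'n \<Rightarrow> real^'n"
  assumes L: "L-lipschitz_on UNIV h" and d: "h differentiable (at x)"
  shows "\<bar>jac h x $ i $ j\<bar> \<le> L"
proof -
  have "jac h x $ i $ j = (jac h x *v axis j 1) $ i"
    by (simp add: matrix_vector_mult_basis column_def)
  also have "\<bar>\<dots>\<bar> \<le> norm (jac h x *v axis j 1)" by (rule component_le_norm_cart)
  also have "\<dots> \<le> L * norm (axis j (1::real) :: real^'n)"
    by (rule deriv_bound[OF L jac_works[OF d]])
  finally show ?thesis by (simp add: norm_axis_1)
qed


lemma vnorm_comp: "\<bar>x $ i\<bar> \<le> vnorm p x"
  by (cases p) (auto simp: vnorm_def intro: member_le_sum Max_ge)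

lemma vnorm_le_sum: "vnorm p x \<le> (\<Sum>i\<in>UNIV. \<bar>x $ i\<bar>)"
  by (cases p) (auto simp: vnorm_def intro!: member_le_sum)

lemma vnorm_pos: "x \<noteq> 0 \<Longrightarrow> vnorm p x > 0"
proof -
  assume "x \<noteq> 0"
  then obtain i where "x $ i \<noteq> 0" by (auto simp: vec_eq_iff)
  hence "0 < \<bar>x $ i\<bar>" by simp
  also have "\<dots> \<le> vnorm p x" by (rule vnorm_comp)
  finally show ?thesis .
qed

lemma mv_comp_bound:
  fixes A :: "real^'n^'n"
  shows "\<bar>(A *v x) $ i\<bar> \<le> (\<Sum>j\<in>UNIV. \<bar>A $ i $ j\<bar>) * vnorm p x"
proof -
  have "\<bar>(A *v x) $ i\<bar> = \<bar>\<Sum>j\<in>UNIV. A $ i $ j * x $ j\<bar>" by (simp add: matrix_vector_mult_def)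
  also have "\<dots> \<le> (\<Sum>j\<in>UNIV. \<bar>A $ i $ j\<bar> * \<bar>x $ j\<bar>)" by (rule order_trans[OF sum_abs]) (simp add: abs_mult)
  also have "\<dots> \<le> (\<Sum>j\<in>UNIV. \<bar>A $ i $ j\<bar> * vnorm p x)"
    by (rule sum_mono) (simp add: mult_left_mono vnorm_comp)
  finally show ?thesis by (simp add: sum_distrib_right)
qed

lemma mv_bound:
  fixes A :: "real^'n^'n"
  shows "vnorm p (A *v x) \<le> (\<Sum>i\<in>UNIV. \<Sum>j\<in>UNIV. \<bar>A $ i $ j\<bar>) * vnorm p x"
proof -
  have "vnorm p (A *v x) \<le> (\<Sum>i\<in>UNIV. \<bar>(A *v x) $ i\<bar>)" by (rule vnorm_le_sum)
  also have "\<dots> \<le> (\<Sum>i\<in>UNIV. (\<Sum>j\<in>UNIV. \<bar>A $ i $ j\<bar>) * vnorm p x)"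
    by (rule sum_mono) (rule mv_comp_bound)
  finally show ?thesis by (simp add: sum_distrib_right)
qed

lemma mnorm_bdd:
  fixes A :: "real^'n^'n"
  shows "bdd_above ((\<lambda>x. vnorm p (A *v x) / vnorm p x) ` {x. x \<noteq> 0})"
proof (rule bdd_aboveI2)
  fix x :: "real^'n" assume "x \<in> {x. x \<noteq> 0}"
  hence pos: "vnorm p x > 0" by (simp add: vnorm_pos)
  show "vnorm p (A *v x) / vnorm p x \<le> (\<Sum>i\<in>UNIV. \<Sum>j\<in>UNIV. \<bar>A $ i $ j\<bar>)"
    using mv_bound[of p A x] pos by (simp add: divide_le_eq)
qed

lemma mnorm_ge:
  fixes A :: "real^'n^'n"
  assumes "x \<noteq> 0"
  shows "vnorm p (A *v x) / vnorm p x \<le> mnorm p A"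
  unfolding mnorm_def by (rule cSUP_upper[OF _ mnorm_bdd]) (use assms in simp)

lemma mnorm_le:
  fixes A :: "real^'n^'n"
  assumes "\<And>x. x \<noteq> 0 \<Longrightarrow> vnorm p (A *v x) \<le> c * vnorm p x"
  shows "mnorm p A \<le> c"
  unfolding mnorm_def
proof (rule cSUP_least)
  have "axis undefined (1::real) \<noteq> (0::real^'n)" by (simp add: axis_def vec_eq_iff)
  thus "{x::real^'n. x \<noteq> 0} \<noteq> {}" by blast
next
  fix x :: "real^'n" assume "x \<in> {x. x \<noteq> 0}"
  hence "x \<noteq> 0" by simp
  thus "vnorm p (A *v x) / vnorm p x \<le> c" using assms[of x] vnorm_pos[of x p]
    by (simp add: divide_le_eq)
qed

lemma mu_shift:
  fixes A :: "real^'n^'n"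
  shows "mu p (A + c *\<^sub>R mat 1) \<le> mu p A + c"
proof (cases p)
  case P1
  have "A $ j $ j + c + (\<Sum>i\<in>UNIV - {j}. \<bar>A $ i $ j\<bar>)
      \<le> Max ((\<lambda>j. A $ j $ j + (\<Sum>i\<in>UNIV - {j}. \<bar>A $ i $ j\<bar>)) ` UNIV) + c" for j
    using Max_ge[of "(\<lambda>j. A $ j $ j + (\<Sum>i\<in>UNIV - {j}. \<bar>A $ i $ j\<bar>)) ` UNIV"
        "A $ j $ j + (\<Sum>i\<in>UNIV - {j}. \<bar>A $ i $ j\<bar>)"] by auto
  moreover have "(\<Sum>i\<in>UNIV - {j}. \<bar>(A + c *\<^sub>R mat 1) $ i $ j\<bar>) = (\<Sum>i\<in>UNIV - {j}. \<bar>A $ i $ j\<bar>)" for j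
    by (rule sum.cong) (auto simp: mat_def)
  ultimately show ?thesis using P1 by (auto simp: mu_def mat_def)
next
  case PInf
  have "A $ i $ i + c + (\<Sum>j\<in>UNIV - {i}. \<bar>A $ i $ j\<bar>)
      \<le> Max ((\<lambda>i. A $ i $ i + (\<Sum>j\<in>UNIV - {i}. \<bar>A $ i $ j\<bar>)) ` UNIV) + c" for i
    using Max_ge[of "(\<lambda>i. A $ i $ i + (\<Sum>j\<in>UNIV - {i}. \<bar>A $ i $ j\<bar>)) ` UNIV"
        "A $ i $ i + (\<Sum>j\<in>UNIV - {i}. \<bar>A $ i $ j\<bar>)"] by auto
  moreover have "(\<Sum>j\<in>UNIV - {i}. \<bar>(A + c *\<^sub>R mat 1) $ i $ j\<bar>) = (\<Sum>j\<in>UNIV - {i}. \<bar>A $ i $ j\<bar>)" for i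
    by (rule sum.cong) (auto simp: mat_def)
  ultimately show ?thesis using PInf by (auto simp: mu_def mat_def)
qed


lemma sum_split_abs:
  fixes g :: "'n::finite \<Rightarrow> real"
  shows "g j + (\<Sum>i\<in>UNIV - {j}. \<bar>g i\<bar>) \<le> (\<Sum>i\<in>UNIV. \<bar>g i\<bar>)"
  "0 \<le> g j \<Longrightarrow> g j + (\<Sum>i\<in>UNIV - {j}. \<bar>g i\<bar>) = (\<Sum>i\<in>UNIV. \<bar>g i\<bar>)"
  using sum.remove[of UNIV j "\<lambda>i. \<bar>g i\<bar>"] by auto

lemma mu_le_mnorm:
  fixes A :: "real^'n^'n"
  shows "mu p A \<le> mnorm p A"
proof (cases p)
  case P1
  have "A $ j $ j + (\<Sum>i\<in>UNIV - {j}. \<bar>A $ i $ j\<bar>) \<le> mnorm P1 A" for j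
  proof -
    have ax: "vnorm P1 (axis j (1::real)) = 1"
      by (simp add: vnorm_def axis_def if_distrib cong: if_cong)
    have "A $ j $ j + (\<Sum>i\<in>UNIV - {j}. \<bar>A $ i $ j\<bar>) \<le> (\<Sum>i\<in>UNIV. \<bar>A $ i $ j\<bar>)"
      using sum_split_abs(1)[of "\<lambda>i. A $ i $ j" j] by simp
    also have "\<dots> = vnorm P1 (A *v axis j 1) / vnorm P1 (axis j (1::real))"
      by (subst ax) (simp add: vnorm_def matrix_vector_mult_basis column_def)
    also have "\<dots> \<le> mnorm P1 A" by (rule mnorm_ge) (simp add: axis_def vec_eq_iff)
    finally show ?thesis .
  qed
  then show ?thesis using P1 by (simp add: mu_def)
next
  case PInf
  have "A $ i $ i + (\<Sum>j\<in>UNIV - {i}. \<bar>A $ i $ j\<bar>) \<le> mnorm PInf A" for i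
  proof -
    define x :: "real^'n" where "x = (\<chi> j. if A $ i $ j \<ge> 0 then 1 else -1)"
    have ax: "vnorm PInf x = 1"
    proof -
      have "(\<lambda>j. \<bar>x $ j\<bar>) ` UNIV = {1}" by (auto simp: x_def)
      thus ?thesis by (simp add: vnorm_def)
    qed
    have x0: "x \<noteq> 0" using ax by (auto simp: vnorm_def)
    have comp: "(A *v x) $ i = (\<Sum>j\<in>UNIV. \<bar>A $ i $ j\<bar>)"
      by (auto simp: matrix_vector_mult_def x_def intro!: sum.cong)
    have "A $ i $ i + (\<Sum>j\<in>UNIV - {i}. \<bar>A $ i $ j\<bar>) \<le> (\<Sum>j\<in>UNIV. \<bar>A $ i $ j\<bar>)"
      using sum_split_abs(1)[of "\<lambda>j. A $ i $ j" i] by simp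
    also have "\<dots> \<le> vnorm PInf (A *v x)" using vnorm_comp[of "A *v x" i PInf] comp by simp
    also have "\<dots> = vnorm PInf (A *v x) / vnorm PInf x" by (simp add: ax)
    also have "\<dots> \<le> mnorm PInf A" by (rule mnorm_ge[OF x0])
    finally show ?thesis .
  qed
  then show ?thesis using PInf by (simp add: mu_def)
qed

lemma mnorm_le_mu:
  fixes A :: "real^'n^'n"
  assumes diag: "\<And>i. A $ i $ i \<ge> 0"
  shows "mnorm p A \<le> mu p A"
proof (rule mnorm_le)
  fix x :: "real^'n" assume "x \<noteq> 0"
  show "vnorm p (A *v x) \<le> mu p A * vnorm p x"
  proof (cases p)
    case P1
    have col: "(\<Sum>i\<in>UNIV. \<bar>A $ i $ j\<bar>) \<le> mu P1 A" for j
    proof -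
      have "(\<Sum>i\<in>UNIV. \<bar>A $ i $ j\<bar>) = A $ j $ j + (\<Sum>i\<in>UNIV - {j}. \<bar>A $ i $ j\<bar>)"
        using sum_split_abs(2)[of "\<lambda>i. A $ i $ j" j] diag by simp
      also have "\<dots> \<le> mu P1 A" by (simp add: mu_def)
      finally show ?thesis .
    qed
    have "vnorm P1 (A *v x) = (\<Sum>i\<in>UNIV. \<bar>\<Sum>j\<in>UNIV. A $ i $ j * x $ j\<bar>)"
      by (simp add: vnorm_def matrix_vector_mult_def)
    also have "\<dots> \<le> (\<Sum>i\<in>UNIV. \<Sum>j\<in>UNIV. \<bar>A $ i $ j\<bar> * \<bar>x $ j\<bar>)"
      by (rule sum_mono, rule order_trans[OF sum_abs]) (simp add: abs_mult)
    also have "\<dots> = (\<Sum>j\<in>UNIV. (\<Sum>i\<in>UNIV. \<bar>A $ i $ j\<bar>) * \<bar>x $ j\<bar>)"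
      by (subst sum.swap) (simp add: sum_distrib_right)
    also have "\<dots> \<le> (\<Sum>j\<in>UNIV. mu P1 A * \<bar>x $ j\<bar>)"
      by (rule sum_mono) (simp add: mult_right_mono col)
    also have "\<dots> = mu P1 A * vnorm P1 x" by (simp add: vnorm_def sum_distrib_left)
    finally show ?thesis using P1 by simp
  next
    case PInf
    have "\<bar>(A *v x) $ i\<bar> \<le> mu PInf A * vnorm PInf x" for i
    proof -
      have "(\<Sum>j\<in>UNIV. \<bar>A $ i $ j\<bar>) = A $ i $ i + (\<Sum>j\<in>UNIV - {i}. \<bar>A $ i $ j\<bar>)"
        using sum_split_abs(2)[of "\<lambda>j. A $ i $ j" i] diag by simp
      also have "\<dots> \<le> mu PInf A" by (simp add: mu_def)
      finally have r: "(\<Sum>j\<in>UNIV. \<bar>A $ i $ j\<bar>) \<le> mu PInf A" .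
      have "0 \<le> vnorm PInf x" using vnorm_comp[of x i PInf] by linarith
      thus ?thesis using mv_comp_bound[of A x i PInf] mult_right_mono[OF r] by (meson order_trans)
    qed
    thus ?thesis using PInf by (simp add: vnorm_def)
  qed
qed


lemma lin_deriv:
  fixes A :: "real^'n^'n"
  shows "((\<lambda>x. A *v x) has_derivative (\<lambda>x. A *v x)) F"
  by (rule bounded_linear.has_derivative[OF matrix_vector_mul_bounded_linear has_derivative_ident])

theorem mainTheorem2:
  fixes p :: pidx and f :: "real^'n \<Rightarrow> real^'n" and W :: "real^'n^'n"
  assumes "\<exists>L. L-lipschitz_on UNIV f"
    and "\<forall>x. f differentiable (at x)"
    and "invertible W"
  shows "WIC p W f \<longleftrightarrow>
    (\<exists>\<gamma>::real. \<gamma> \<ge> 0 \<and> (\<exists>\<phi> :: real^'n \<Rightarrow> real^'n.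
        (\<exists>L. L-lipschitz_on UNIV \<phi>) \<and> (\<forall>x. \<phi> differentiable (at x)) \<and>
        (\<forall>x. mnorm p (jac \<phi> x) \<le> \<gamma>) \<and>
        (\<forall>x. f x = - \<gamma> *\<^sub>R x + matrix_inv W *v \<phi> (W *v x))))"
proof
  define Wi where "Wi = matrix_inv W"
  note iv = inv_W_vec[OF assms(3), folded Wi_def]
  assume wic: "WIC p W f"
  obtain L where Lf: "L-lipschitz_on UNIV f" using assms(1) by blast
  obtain BW where BW: "BW-lipschitz_on UNIV ((*v) W)"
    using bounded_linear.lipschitz_boundE[OF matrix_vector_mul_bounded_linear] by blast
  obtain BWi where BWi: "BWi-lipschitz_on UNIV ((*v) Wi)"
    using bounded_linear.lipschitz_boundE[OF matrix_vector_mul_bounded_linear] by blast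
  define g where "g = (\<lambda>y. W *v f (Wi *v y))"
  have "(L * BWi)-lipschitz_on UNIV (\<lambda>y. f (Wi *v y))"
    using lipschitz_on_compose2[OF BWi lipschitz_on_subset[OF Lf subset_UNIV]] by simp
  hence gL: "(BW * (L * BWi))-lipschitz_on UNIV g"
    using lipschitz_on_compose2[OF _ lipschitz_on_subset[OF BW subset_UNIV]] unfolding g_def by blast
  define \<gamma> where "\<gamma> = BW * (L * BWi)"
  have g0: "\<gamma> \<ge> 0" using lipschitz_on_nonneg[OF gL] by (simp add: \<gamma>_def)
  define J where "J = (\<lambda>y. jac f (Wi *v y))"
  have dg: "(g has_derivative (\<lambda>v. (W ** J y ** Wi) *v v)) (at y)" for y
  proof -
    have 2: "(f has_derivative (\<lambda>v. J y *v v)) (at (Wi *v y))"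
      unfolding J_def using jac_works assms(2) by blast
    have 3: "((\<lambda>y. f (Wi *v y)) has_derivative (\<lambda>v. J y *v (Wi *v v))) (at y)"
      using has_derivative_compose[OF lin_deriv 2] by simp
    show ?thesis
      using bounded_linear.has_derivative[OF matrix_vector_mul_bounded_linear[of W] 3]
      by (simp add: g_def matrix_vector_mul_assoc matrix_mul_assoc)
  qed
  define \<phi> where "\<phi> = (\<lambda>y. g y + \<gamma> *\<^sub>R y)"
  have dphi: "(\<phi> has_derivative (\<lambda>v. (W ** J y ** Wi + \<gamma> *\<^sub>R mat 1) *v v)) (at y)" for y
  proof -
    have "(\<phi> has_derivative (\<lambda>v. (W ** J y ** Wi) *v v + \<gamma> *\<^sub>R v)) (at y)"
      unfolding \<phi>_def by (rule has_derivative_add[OF dg has_derivative_scaleR_right[OF has_derivative_ident]])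
    moreover have "(\<lambda>v. (W ** J y ** Wi) *v v + \<gamma> *\<^sub>R v) = (\<lambda>v. (W ** J y ** Wi + \<gamma> *\<^sub>R mat 1) *v v)"
      by (simp add: matrix_vector_mult_add_rdistrib scaleR_matrix_vector_assoc[symmetric])
    ultimately show ?thesis by simp
  qed
  show "\<exists>\<gamma>::real. \<gamma> \<ge> 0 \<and> (\<exists>\<phi> :: real^'n \<Rightarrow> real^'n.
        (\<exists>L. L-lipschitz_on UNIV \<phi>) \<and> (\<forall>x. \<phi> differentiable (at x)) \<and>
        (\<forall>x. mnorm p (jac \<phi> x) \<le> \<gamma>) \<and>
        (\<forall>x. f x = - \<gamma> *\<^sub>R x + matrix_inv W *v \<phi> (W *v x)))"
  proof (intro exI conjI allI)
    show "\<gamma> \<ge> 0" by (rule g0)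
    show "(\<gamma> + \<gamma> * 1)-lipschitz_on UNIV \<phi>" unfolding \<phi>_def
      by (rule lipschitz_on_add[OF gL[folded \<gamma>_def] lipschitz_on_cmult_nonneg[OF lipschitz_on_id g0]])
    show "\<phi> differentiable (at x)" for x using dphi by (rule differentiableI)
    show "mnorm p (jac \<phi> y) \<le> \<gamma>" for y
    proof -
      have jp: "jac \<phi> y = W ** J y ** Wi + \<gamma> *\<^sub>R mat 1" by (rule jac_unique[OF dphi])
      have jg: "jac g y = W ** J y ** Wi" by (rule jac_unique[OF dg])
      have diag: "(W ** J y ** Wi + \<gamma> *\<^sub>R mat 1) $ i $ i \<ge> 0" for i
        using entry_bound[OF gL differentiableI[OF dg], of y i i] jg
        by (simp add: mat_def \<gamma>_def)
      have "mnorm p (jac \<phi> y) \<le> mu p (W ** J y ** Wi + \<gamma> *\<^sub>R mat 1)"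
        unfolding jp by (rule mnorm_le_mu[OF diag])
      also have "\<dots> \<le> mu p (W ** J y ** Wi) + \<gamma>" by (rule mu_shift)
      also have "mu p (W ** J y ** Wi) \<le> 0"
        using wic unfolding WIC_def wmu_def J_def Wi_def by blast
      finally show ?thesis by simp
    qed
    show "f x = - \<gamma> *\<^sub>R x + matrix_inv W *v \<phi> (W *v x)" for x
      by (simp add: \<phi>_def g_def iv Wi_def[symmetric] matrix_vector_right_distrib matrix_vector_mult_scaleR)
  qed
next
  define Wi where "Wi = matrix_inv W"
  note iv = inv_W_vec[OF assms(3), folded Wi_def]
  assume "\<exists>\<gamma>::real. \<gamma> \<ge> 0 \<and> (\<exists>\<phi> :: real^'n \<Rightarrow> real^'n.
        (\<exists>L. L-lipschitz_on UNIV \<phi>) \<and> (\<forall>x. \<phi> differentiable (at x)) \<and>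
        (\<forall>x. mnorm p (jac \<phi> x) \<le> \<gamma>) \<and>
        (\<forall>x. f x = - \<gamma> *\<^sub>R x + matrix_inv W *v \<phi> (W *v x)))"
  then obtain \<gamma> \<phi> where dphi: "\<forall>x. \<phi> differentiable (at x)"
    and mn: "\<forall>x. mnorm p (jac \<phi> x) \<le> \<gamma>"
    and fe: "\<forall>x. f x = - \<gamma> *\<^sub>R x + Wi *v \<phi> (W *v x)" unfolding Wi_def by blast
  have fdef: "f = (\<lambda>x. - \<gamma> *\<^sub>R x + Wi *v \<phi> (W *v x))" using fe by auto
  show "WIC p W f" unfolding WIC_def wmu_def
  proof
    fix x
    define J where "J = jac \<phi> (W *v x)"
    define M where "M = Wi ** J ** W + (- \<gamma>) *\<^sub>R mat 1"
    have 2: "(\<phi> has_derivative (\<lambda>v. J *v v)) (at (W *v x))"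
      unfolding J_def using jac_works dphi by blast
    have 3: "((\<lambda>y. \<phi> (W *v y)) has_derivative (\<lambda>v. J *v (W *v v))) (at x)"
      using has_derivative_compose[OF lin_deriv 2] by simp
    have 4: "(f has_derivative (\<lambda>v. - \<gamma> *\<^sub>R v + Wi *v (J *v (W *v v)))) (at x)"
      unfolding fdef
      by (rule has_derivative_add[OF has_derivative_scaleR_right[OF has_derivative_ident]
            bounded_linear.has_derivative[OF matrix_vector_mul_bounded_linear 3]])
    have "(\<lambda>v. - \<gamma> *\<^sub>R v + Wi *v (J *v (W *v v))) = (\<lambda>v. M *v v)"
      by (rule ext) (simp add: M_def matrix_vector_mult_add_rdistrib matrix_vector_mult_diff_rdistrib
          scaleR_matrix_vector_assoc[symmetric] matrix_vector_mul_assoc[symmetric])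
    hence jf: "jac f x = M" using 4 jac_unique by metis
    have "W ** M ** Wi = J + (- \<gamma>) *\<^sub>R mat 1"
      unfolding matrix_eq
      by (simp add: M_def matrix_vector_mult_add_rdistrib scaleR_matrix_vector_assoc[symmetric]
          matrix_vector_mul_assoc[symmetric] iv matrix_vector_right_distrib matrix_vector_mult_scaleR
          matrix_vector_mult_diff_rdistrib vec.diff)
    hence "mu p (W ** jac f x ** matrix_inv W) = mu p (J + (- \<gamma>) *\<^sub>R mat 1)"
      by (simp add: jf Wi_def)
    also have "\<dots> \<le> mu p J + (- \<gamma>)" by (rule mu_shift)
    also have "\<dots> \<le> mnorm p J - \<gamma>" using mu_le_mnorm[of p J] by simp
    also have "\<dots> \<le> 0" using mn by (simp add: J_def)
    finally show "mu p (W ** jac f x ** matrix_inv W) \<le> 0" .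
  qed
qed

end
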